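(* Let $L\subset\mathbb{Z}^m$ be a non-zero lattice with $L\cap\mathbb{N}^m=\{\mathbf 0\}$, and let $q$ be the number of elements of $\mathcal{T}_{\min}$. Then $\mathrm{bar}(I_L)\ge\lceil q/2\rceil$.
   Context: $K$ is a field, $I_L=(\mathbf x^{\mathbf u_+}-\mathbf x^{\mathbf u_-}:\mathbf u\in L)\subset K[x_1,\ldots,x_m]$ where $\mathbf u_\pm$ are the positive/negative parts of $\mathbf u$. A monomial $M$ is indispensable of $I_L$ if every system of binomial generators of $I_L$ contains a binomial having $M$ as a monomial. $\mathcal{T}_{\min}$ is the set of inclusion-minimal elements among supports $\mathrm{supp}(M)=\{i:x_i\mid M\}$ of indispensable monomials $M$ of $I_L$. $\mathrm{bar}(I_L)$ is the least $s$ such that there are binomials $B_1,\ldots,B_s\in I_L$ with $\mathrm{rad}(I_L)=\mathrm{rad}(B_1,\ldots,B_s)$. *)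

theory Defs
  imports Complex_Main "HOL-Library.Poly_Mapping"
begin

text \<open>Polynomials over a field 'k in the variables x_0, x_1, ...; a monomial x^a is
  represented by its exponent a (a finitely supported map nat to nat), a polynomial by its coefficient map.
  The ring K[x_1,...,x_m] is the subring of polynomials only involving the variables
  with index < m.\<close>

type_synonym 'k mpoly = "(nat \<Rightarrow>\<^sub>0 nat) \<Rightarrow>\<^sub>0 'k"

definition in_ring :: "nat \<Rightarrow> 'k::field mpoly \<Rightarrow> bool" where
  "in_ring m p \<longleftrightarrow> (\<forall>a \<in> Poly_Mapping.keys p. Poly_Mapping.keys a \<subseteq> {..<m})"

definition gen_ideal :: "nat \<Rightarrow> 'k::field mpoly set \<Rightarrow> 'k mpoly set" where
  "gen_ideal m S = {p. \<exists>F c. finite F \<and> F \<subseteq> S \<and> (\<forall>s\<in>F. in_ring m (c s)) \<and>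
                          p = (\<Sum>s\<in>F. c s * s)}"

definition radical :: "nat \<Rightarrow> 'k::field mpoly set \<Rightarrow> 'k mpoly set" where
  "radical m I = {p. in_ring m p \<and> (\<exists>n. p ^ n \<in> I)}"

definition xmon :: "(nat \<Rightarrow>\<^sub>0 nat) \<Rightarrow> 'k::field mpoly" where
  "xmon a = Poly_Mapping.single a 1"

definition is_binomial :: "nat \<Rightarrow> 'k::field mpoly \<Rightarrow> bool" where
  "is_binomial m p \<longleftrightarrow> (\<exists>a b. Poly_Mapping.keys a \<subseteq> {..<m} \<and> Poly_Mapping.keys b \<subseteq> {..<m} \<and> p = xmon a - xmon b)"

text \<open>Lattice vectors u \<in> Z^m are functions nat \<Rightarrow> int vanishing outside {..<m};
  positive and negative parts as exponent vectors.\<close>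
definition pos_part :: "nat \<Rightarrow> (nat \<Rightarrow> int) \<Rightarrow> (nat \<Rightarrow>\<^sub>0 nat)" where
  "pos_part m u = Abs_poly_mapping (\<lambda>i. if i < m then nat (u i) else 0)"

definition neg_part :: "nat \<Rightarrow> (nat \<Rightarrow> int) \<Rightarrow> (nat \<Rightarrow>\<^sub>0 nat)" where
  "neg_part m u = Abs_poly_mapping (\<lambda>i. if i < m then nat (- u i) else 0)"

definition is_lattice :: "nat \<Rightarrow> (nat \<Rightarrow> int) set \<Rightarrow> bool" where
  "is_lattice m L \<longleftrightarrow> L \<subseteq> {u. \<forall>i\<ge>m. u i = 0} \<and> (\<lambda>i. 0) \<in> L \<and>
     (\<forall>u\<in>L. \<forall>v\<in>L. (\<lambda>i. u i + v i) \<in> L) \<and> (\<forall>u\<in>L. (\<lambda>i. - u i) \<in> L)"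

definition lattice_ideal :: "nat \<Rightarrow> (nat \<Rightarrow> int) set \<Rightarrow> 'k::field mpoly set" where
  "lattice_ideal m L = gen_ideal m {xmon (pos_part m u) - xmon (neg_part m u) | u. u \<in> L}"

definition indispensable :: "nat \<Rightarrow> 'k::field mpoly set \<Rightarrow> (nat \<Rightarrow>\<^sub>0 nat) \<Rightarrow> bool" where
  "indispensable m I c \<longleftrightarrow> Poly_Mapping.keys c \<subseteq> {..<m} \<and>
     (\<forall>G. (\<forall>g\<in>G. is_binomial m g) \<and> gen_ideal m G = I \<longrightarrow> (\<exists>B\<in>G. c \<in> Poly_Mapping.keys B))"

definition T_min :: "nat \<Rightarrow> 'k::field mpoly set \<Rightarrow> nat set set" where
  "T_min m I = (let T = {Poly_Mapping.keys c | c. indispensable m I c} in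
                  {S \<in> T. \<not> (\<exists>S'\<in>T. S' \<subset> S)})"

definition bar :: "nat \<Rightarrow> 'k::field mpoly set \<Rightarrow> nat" where
  "bar m I = (LEAST s. \<exists>B :: nat \<Rightarrow> 'k mpoly.
      (\<forall>i<s. is_binomial m (B i) \<and> B i \<in> I) \<and>
      radical m I = radical m (gen_ideal m (B ` {..<s})))"

end

theory Submission
  imports Defs
begin


lemma lookup_pos_part: "Poly_Mapping.lookup (pos_part m u) i = (if i < m then nat (u i) else 0)"
proof -
  have "finite {i. (if i < m then nat (u i) else 0) \<noteq> 0}"
    by (rule finite_subset[of _ "{..<m}"]) (auto split: if_splits)
  thus ?thesis unfolding pos_part_def by simp
qed

lemma lookup_neg_part: "Poly_Mapping.lookup (neg_part m u) i = (if i < m then nat (- u i) else 0)"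
proof -
  have "finite {i. (if i < m then nat (- u i) else 0) \<noteq> 0}"
    by (rule finite_subset[of _ "{..<m}"]) (auto split: if_splits)
  thus ?thesis unfolding neg_part_def by simp
qed

lemma keys_pos_part: "Poly_Mapping.keys (pos_part m u) \<subseteq> {..<m}"
  by (auto simp: in_keys_iff lookup_pos_part split: if_splits)

lemma keys_neg_part: "Poly_Mapping.keys (neg_part m u) \<subseteq> {..<m}"
  by (auto simp: in_keys_iff lookup_neg_part split: if_splits)

lemma neg_part_eq: "neg_part m u = pos_part m (\<lambda>i. - u i)"
  by (rule poly_mapping_eqI) (simp add: lookup_pos_part lookup_neg_part)

lemma keys_add_nat: "Poly_Mapping.keys (a::nat\<Rightarrow>\<^sub>0nat) \<subseteq> Poly_Mapping.keys (a + b)"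
  by (auto simp: in_keys_iff lookup_add)

lemma keys_add_nat2: "Poly_Mapping.keys (b::nat\<Rightarrow>\<^sub>0nat) \<subseteq> Poly_Mapping.keys (a + b)"
  by (auto simp: in_keys_iff lookup_add)

lemma keys_add_nat_eq: "Poly_Mapping.keys ((a::nat\<Rightarrow>\<^sub>0nat) + b) = Poly_Mapping.keys a \<union> Poly_Mapping.keys b"
  using keys_add[of a b] keys_add_nat[of a b] keys_add_nat2[of b a] by auto

lemma in_ring_mult: "in_ring m p \<Longrightarrow> in_ring m q \<Longrightarrow> in_ring m (p * q)"
  unfolding in_ring_def using keys_mult[of p q] by (fastforce simp: keys_add_nat_eq)

lemma in_ring_add: "in_ring m p \<Longrightarrow> in_ring m q \<Longrightarrow> in_ring m (p + q)"
  unfolding in_ring_def using keys_add[of p q] by blast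

lemma in_ring_diff: "in_ring m p \<Longrightarrow> in_ring m q \<Longrightarrow> in_ring m (p - q)"
  unfolding in_ring_def using keys_diff[of p q] by blast

lemma in_ring_one: "in_ring m (1::'k::field mpoly)"
  unfolding in_ring_def by simp

lemma in_ring_zero: "in_ring m (0::'k::field mpoly)"
  unfolding in_ring_def by simp

lemma in_ring_xmon: "Poly_Mapping.keys a \<subseteq> {..<m} \<Longrightarrow> in_ring m (xmon a :: 'k::field mpoly)"
  unfolding in_ring_def xmon_def by simp

lemma xmon_add: "xmon (a + b) = (xmon a * xmon b :: 'k::field mpoly)"
  unfolding xmon_def by (simp add: mult_single)

lemma gen_ideal_zero: "0 \<in> gen_ideal m S"
  unfolding gen_ideal_def by (rule CollectI, rule exI[of _ "{}"]) auto

lemma gen_ideal_base: "s \<in> S \<Longrightarrow> s \<in> gen_ideal m S"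
  unfolding gen_ideal_def
  by (rule CollectI, rule exI[of _ "{s}"], rule exI[of _ "\<lambda>_. 1"]) (auto simp: in_ring_one)

lemma gen_ideal_add:
  assumes "p \<in> gen_ideal m S" "q \<in> gen_ideal m S"
  shows "p + q \<in> gen_ideal m S"
proof -
  obtain F c where F: "finite F" "F \<subseteq> S" "\<forall>s\<in>F. in_ring m (c s)" "p = (\<Sum>s\<in>F. c s * s)"
    using assms(1) unfolding gen_ideal_def by blast
  obtain G d where G: "finite G" "G \<subseteq> S" "\<forall>s\<in>G. in_ring m (d s)" "q = (\<Sum>s\<in>G. d s * s)"
    using assms(2) unfolding gen_ideal_def by blast
  define c' where "c' s = (if s \<in> F then c s else 0)" for s
  define d' where "d' s = (if s \<in> G then d s else 0)" for s
  have 1: "p = (\<Sum>s\<in>F \<union> G. c' s * s)"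
    unfolding F(4)
  proof (rule sum.mono_neutral_cong_left)
    show "finite (F \<union> G)" using F(1) G(1) by blast
    show "F \<subseteq> F \<union> G" by blast
    show "\<forall>i\<in>F \<union> G - F. c' i * i = 0" by (simp add: c'_def)
    show "c x * x = c' x * x" if "x \<in> F" for x using that by (simp add: c'_def)
  qed
  have 2: "q = (\<Sum>s\<in>F \<union> G. d' s * s)"
    unfolding G(4)
  proof (rule sum.mono_neutral_cong_left)
    show "finite (F \<union> G)" using F(1) G(1) by blast
    show "G \<subseteq> F \<union> G" by blast
    show "\<forall>i\<in>F \<union> G - G. d' i * i = 0" by (simp add: d'_def)
    show "d x * x = d' x * x" if "x \<in> G" for x using that by (simp add: d'_def)
  qed
  have "p + q = (\<Sum>s\<in>F \<union> G. (c' s + d' s) * s)"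
    unfolding 1 2 by (simp add: sum.distrib distrib_right)
  moreover have "\<forall>s\<in>F \<union> G. in_ring m (c' s + d' s)"
    using F(3) G(3) by (auto simp: c'_def d'_def intro!: in_ring_add in_ring_zero)
  ultimately show ?thesis unfolding gen_ideal_def
    by (intro CollectI exI[of _ "F \<union> G"] exI[of _ "\<lambda>s. c' s + d' s"]) (use F(1,2) G(1,2) in auto)
qed

lemma gen_ideal_mult:
  assumes "p \<in> gen_ideal m S" "in_ring m q"
  shows "q * p \<in> gen_ideal m S"
proof -
  obtain F c where F: "finite F" "F \<subseteq> S" "\<forall>s\<in>F. in_ring m (c s)" "p = (\<Sum>s\<in>F. c s * s)"
    using assms(1) unfolding gen_ideal_def by blast
  have "q * p = (\<Sum>s\<in>F. (q * c s) * s)" unfolding F(4) by (simp add: sum_distrib_left mult.assoc)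
  moreover have "\<forall>s\<in>F. in_ring m (q * c s)" using F assms(2) by (auto intro: in_ring_mult)
  ultimately show ?thesis unfolding gen_ideal_def
    by (intro CollectI exI[of _ F] exI[of _ "\<lambda>s. q * c s"]) (use F(1,2) in auto)
qed

lemma gen_ideal_mono: "S \<subseteq> T \<Longrightarrow> gen_ideal m S \<subseteq> gen_ideal m T"
  unfolding gen_ideal_def by blast

lemma gen_ideal_sum:
  assumes "finite F" "\<And>s. s \<in> F \<Longrightarrow> f s \<in> gen_ideal m T"
  shows "sum f F \<in> gen_ideal m T"
  using assms by (induction F rule: finite_induct) (auto intro: gen_ideal_add gen_ideal_zero)

lemma gen_ideal_sub:
  assumes "S \<subseteq> gen_ideal m T"
  shows "gen_ideal m S \<subseteq> gen_ideal m T"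
proof
  fix p assume "p \<in> gen_ideal m S"
  then obtain F c where F: "finite F" "F \<subseteq> S" "\<forall>s\<in>F. in_ring m (c s)" "p = (\<Sum>s\<in>F. c s * s)"
    unfolding gen_ideal_def by blast
  show "p \<in> gen_ideal m T" unfolding F(4)
    by (rule gen_ideal_sum) (use F assms in \<open>auto intro: gen_ideal_mult\<close>)
qed



lemma antichain_finite:
  assumes "finite D"
    and "\<forall>f\<in>A. \<forall>x. x \<notin> D \<longrightarrow> f x = 0"
    and "\<forall>f\<in>A. \<forall>g\<in>A. (\<forall>x. f x \<le> g x) \<longrightarrow> f = g"
  shows "finite (A :: ('a \<Rightarrow> nat) set)"
  using assms
proof (induction D arbitrary: A rule: finite_psubset_induct)
  case (psubset D)
  show ?case
  proof (cases "A = {}")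
    case True thus ?thesis by simp
  next
    case False
    then obtain a where a: "a \<in> A" by blast
    define Sl where "Sl j t = {f\<in>A. f j = t}" for j t
    have cover: "A \<subseteq> {a} \<union> (\<Union>j\<in>D. \<Union>t\<in>{..<a j}. Sl j t)"
    proof
      fix f assume f: "f \<in> A"
      show "f \<in> {a} \<union> (\<Union>j\<in>D. \<Union>t\<in>{..<a j}. Sl j t)"
      proof (cases "f = a")
        case True thus ?thesis by simp
      next
        case False
        hence "\<not> (\<forall>x. a x \<le> f x)" using psubset.prems(2) a f by metis
        then obtain x where x: "f x < a x" by (meson not_le)
        have "x \<in> D" using x psubset.prems(1) a by (metis less_nat_zero_code)
        thus ?thesis using x f unfolding Sl_def by blast
      qed
    qed
    have slfin: "finite (Sl j t)" if j: "j \<in> D" for j t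
    proof -
      let ?g = "\<lambda>f. f(j := 0)"
      have inj: "inj_on ?g (Sl j t)"
      proof (rule inj_onI)
        fix f g assume "f \<in> Sl j t" "g \<in> Sl j t" "f(j := 0) = g(j := 0)"
        hence e: "f(j := 0) = g(j := 0)" "f j = g j" unfolding Sl_def by auto
        show "f = g"
        proof
          fix x show "f x = g x" using fun_cong[OF e(1), of x] e(2) by (cases "x = j") auto
        qed
      qed
      have "finite (?g ` Sl j t)"
      proof (rule psubset.IH[of "D - {j}"])
        show "D - {j} \<subset> D" using j by blast
        show "\<forall>f\<in>?g ` Sl j t. \<forall>x. x \<notin> D - {j} \<longrightarrow> f x = 0"
        proof (intro ballI allI impI)
          fix f' x assume "f' \<in> ?g ` Sl j t" "x \<notin> D - {j}"
          then obtain f where "f \<in> A" "f' = ?g f" "x \<notin> D \<or> x = j" unfolding Sl_def by blast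
          thus "f' x = 0" using psubset.prems(1) by auto
        qed
        show "\<forall>f\<in>?g ` Sl j t. \<forall>g\<in>?g ` Sl j t. (\<forall>x. f x \<le> g x) \<longrightarrow> f = g"
        proof (intro ballI impI)
          fix f' g' assume f': "f' \<in> ?g ` Sl j t" and g': "g' \<in> ?g ` Sl j t"
            and le: "\<forall>x. f' x \<le> g' x"
          obtain f where f: "f \<in> Sl j t" "f' = ?g f" using f' by blast
          obtain g where g: "g \<in> Sl j t" "g' = ?g g" using g' by blast
          have "\<forall>x. f x \<le> g x"
          proof
            fix x show "f x \<le> g x"
              using le[rule_format, of x] f g unfolding Sl_def by (cases "x = j") auto
          qed
          hence "f = g" using psubset.prems(2) f g unfolding Sl_def by blast
          thus "f' = g'" using f g by simp
        qed
      qed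
      thus ?thesis using inj finite_imageD by blast
    qed
    have "finite (\<Union>j\<in>D. \<Union>t\<in>{..<a j}. Sl j t)"
      by (intro finite_UN_I) (simp_all add: psubset.hyps slfin)
    hence "finite ({a} \<union> (\<Union>j\<in>D. \<Union>t\<in>{..<a j}. Sl j t))" by simp
    with cover show ?thesis by (rule finite_subset)
  qed
qed



definition conf :: "(nat \<Rightarrow> int) \<Rightarrow> (nat \<Rightarrow> int) \<Rightarrow> bool" where
  "conf v u \<longleftrightarrow> (\<forall>i. (0 \<le> v i \<and> v i \<le> u i) \<or> (u i \<le> v i \<and> v i \<le> 0))"

definition graver :: "(nat \<Rightarrow> int) set \<Rightarrow> (nat \<Rightarrow> int) set" where
  "graver L = {u\<in>L. u \<noteq> (\<lambda>i. 0) \<and> (\<forall>v\<in>L. v \<noteq> (\<lambda>i. 0) \<and> conf v u \<longrightarrow> v = u)}"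

definition binG :: "nat \<Rightarrow> (nat \<Rightarrow> int) \<Rightarrow> 'k::field mpoly" where
  "binG m u = xmon (pos_part m u) - xmon (neg_part m u)"

definition enc :: "(nat \<Rightarrow> int) \<Rightarrow> bool \<times> nat \<Rightarrow> nat" where
  "enc u = (\<lambda>(b, i). if b then nat (u i) else nat (- u i))"

lemma int_aux3: "nat (a::int) \<le> nat b \<Longrightarrow> nat (-a) \<le> nat (-b) \<Longrightarrow> (0 \<le> a \<and> a \<le> b) \<or> (b \<le> a \<and> a \<le> 0)"
  by arith

lemma int_aux4: "nat (u::int) = nat w \<Longrightarrow> nat (-u) = nat (-w) \<Longrightarrow> u = w" by arith

lemma enc_inj: "inj enc"
proof (rule injI)
  fix u w assume e: "enc u = enc w"
  show "u = w"
  proof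
    fix i
    have "nat (u i) = nat (w i)" "nat (- u i) = nat (- w i)"
      using fun_cong[OF e, of "(True, i)"] fun_cong[OF e, of "(False, i)"] by (auto simp: enc_def)
    thus "u i = w i" by (rule int_aux4)
  qed
qed

lemma int_aux1: "(0 \<le> (a::int) \<and> a \<le> b) \<or> (b \<le> a \<and> a \<le> 0) \<Longrightarrow> nat a \<le> nat b \<and> nat (-a) \<le> nat (-b)"
  by arith

lemma int_aux2: "(0 \<le> (a::int) \<and> a \<le> b) \<or> (b \<le> a \<and> a \<le> 0) \<Longrightarrow> nat b = nat a + nat (b - a) \<and> nat (-b) = nat (-a) + nat (-(b-a))"
  by arith

lemma enc_le: "(\<forall>x. enc v x \<le> enc u x) \<longleftrightarrow> conf v u"
proof
  assume h: "\<forall>x. enc v x \<le> enc u x"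
  show "conf v u" unfolding conf_def
  proof
    fix i
    have "nat (v i) \<le> nat (u i)" "nat (- v i) \<le> nat (- u i)"
      using h[rule_format, of "(True, i)"] h[rule_format, of "(False, i)"] by (auto simp: enc_def)
    thus "(0 \<le> v i \<and> v i \<le> u i) \<or> (u i \<le> v i \<and> v i \<le> 0)" by (rule int_aux3)
  qed
next
  assume h: "conf v u"
  show "\<forall>x. enc v x \<le> enc u x"
  proof
    fix x :: "bool \<times> nat"
    obtain b i where x: "x = (b, i)" by force
    have "nat (v i) \<le> nat (u i) \<and> nat (-v i) \<le> nat (-u i)"
      using h int_aux1 unfolding conf_def by blast
    thus "enc v x \<le> enc u x" using x by (cases b) (auto simp: enc_def)
  qed
qed

lemma graver_finite:
  assumes "is_lattice m L"
  shows "finite (graver L)"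
proof -
  have "finite (enc ` graver L)"
  proof (rule antichain_finite[of "UNIV \<times> {..<m}"])
    show "finite (UNIV \<times> {..<m} :: (bool \<times> nat) set)" by simp
    show "\<forall>f\<in>enc ` graver L. \<forall>x. x \<notin> UNIV \<times> {..<m} \<longrightarrow> f x = 0"
    proof (intro ballI allI impI)
      fix f and x :: "bool \<times> nat" assume f: "f \<in> enc ` graver L" and x: "x \<notin> UNIV \<times> {..<m}"
      obtain u where u: "u \<in> L" "f = enc u" using f unfolding graver_def by blast
      obtain b i where bi: "x = (b, i)" by force
      have "i \<ge> m" using x bi by auto
      hence "u i = 0" using u assms unfolding is_lattice_def by blast
      thus "f x = 0" using u bi by (simp add: enc_def)
    qed
    show "\<forall>f\<in>enc ` graver L. \<forall>g\<in>enc ` graver L. (\<forall>x. f x \<le> g x) \<longrightarrow> f = g"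
    proof (intro ballI impI)
      fix f g assume f: "f \<in> enc ` graver L" and g: "g \<in> enc ` graver L" and le: "\<forall>x. f x \<le> g x"
      obtain u where u: "u \<in> graver L" "f = enc u" using f by blast
      obtain w where w: "w \<in> graver L" "g = enc w" using g by blast
      have "conf u w" using le u w enc_le by simp
      hence "u = w" using u w unfolding graver_def by blast
      thus "f = g" using u w by simp
    qed
  qed
  moreover have "inj_on enc (graver L)" using enc_inj by (rule inj_on_subset) simp
  ultimately show ?thesis using finite_image_iff by blast
qed

lemma pos_part_zero: "pos_part m (\<lambda>i. 0) = 0"
  by (rule poly_mapping_eqI) (simp add: lookup_pos_part)

lemma neg_part_zero: "neg_part m (\<lambda>i. 0) = 0"
  by (rule poly_mapping_eqI) (simp add: lookup_neg_part)

lemma conf_add_pos: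
  assumes "conf v u" "w = (\<lambda>i. u i - v i)"
  shows "pos_part m u = pos_part m v + pos_part m w" "neg_part m u = neg_part m v + neg_part m w"
proof -
  have h: "nat (u k) = nat (v k) + nat (w k) \<and> nat (- u k) = nat (- v k) + nat (- w k)" for k
    using assms int_aux2[of "v k" "u k"] unfolding conf_def by auto
  show "pos_part m u = pos_part m v + pos_part m w"
    by (rule poly_mapping_eqI) (simp add: lookup_add lookup_pos_part h)
  show "neg_part m u = neg_part m v + neg_part m w"
    by (rule poly_mapping_eqI) (simp add: lookup_add lookup_neg_part h)
qed

definition norm1 :: "nat \<Rightarrow> (nat \<Rightarrow> int) \<Rightarrow> nat" where
  "norm1 m u = (\<Sum>i<m. nat \<bar>u i\<bar>)"

lemma norm1_pos:
  assumes "\<forall>i\<ge>m. v i = 0" "v \<noteq> (\<lambda>i. 0)"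
  shows "norm1 m v > 0"
proof -
  obtain i where i: "v i \<noteq> 0" using assms(2) by auto
  hence im: "i < m" using assms(1) by (meson not_le)
  have "0 < nat \<bar>v i\<bar>" using i by simp
  also have "\<dots> \<le> norm1 m v" unfolding norm1_def
    by (rule member_le_sum) (use im in auto)
  finally show ?thesis .
qed

lemma int_aux5a: "(0 \<le> (a::int) \<and> a \<le> b) \<or> (b \<le> a \<and> a \<le> 0) \<Longrightarrow> \<bar>b\<bar> = \<bar>a\<bar> + \<bar>b - a\<bar>"
  by linarith

lemma int_aux5: "(0 \<le> (a::int) \<and> a \<le> b) \<or> (b \<le> a \<and> a \<le> 0) \<Longrightarrow> nat \<bar>b\<bar> = nat \<bar>a\<bar> + nat \<bar>b - a\<bar>"
  using int_aux5a[of a b] by (simp add: nat_add_distrib[symmetric])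

lemma int_aux6: "(0 \<le> (a::int) \<and> a \<le> b) \<or> (b \<le> a \<and> a \<le> 0) \<Longrightarrow> (0 \<le> b - a \<and> b - a \<le> b) \<or> (b \<le> b - a \<and> b - a \<le> 0)"
  by linarith

lemma binG_zero: "binG m (\<lambda>i. 0) = 0"
  by (simp add: binG_def pos_part_zero neg_part_zero)

lemma graver_gen:
  assumes lat: "is_lattice m L"
  shows "u \<in> L \<Longrightarrow> (binG m u :: 'k::field mpoly) \<in> gen_ideal m (binG m ` graver L)"
proof (induction "norm1 m u" arbitrary: u rule: less_induct)
  case less
  show ?case
  proof (cases "u = (\<lambda>i. 0)")
    case True thus ?thesis by (simp add: binG_zero gen_ideal_zero)
  next
    case nz: False
    show ?thesis
    proof (cases "u \<in> graver L")
      case True thus ?thesis by (intro gen_ideal_base) blast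
    next
      case False
      then obtain v where v: "v \<in> L" "v \<noteq> (\<lambda>i. 0)" "conf v u" "v \<noteq> u"
        using less.prems nz unfolding graver_def by blast
      define w where "w = (\<lambda>i. u i - v i)"
      have addL: "\<forall>u\<in>L. \<forall>v\<in>L. (\<lambda>i. u i + v i) \<in> L" and negL: "\<forall>u\<in>L. (\<lambda>i. - u i) \<in> L"
        using lat unfolding is_lattice_def by simp_all
      have nvL: "(\<lambda>i. - v i) \<in> L" using negL v(1) by (rule bspec)
      have "(\<lambda>i. u i + - v i) \<in> L" using addL[rule_format, OF less.prems nvL] .
      hence wL: "w \<in> L" unfolding w_def by simp
      have wnz: "w \<noteq> (\<lambda>i. 0)"
      proof
        assume "w = (\<lambda>i. 0)"
        hence "u = v" unfolding w_def by (simp add: fun_eq_iff)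
        thus False using v(4) by simp
      qed
      have vanish: "\<forall>i\<ge>m. x i = 0" if "x \<in> L" for x
      proof -
        have "L \<subseteq> {u. \<forall>i\<ge>m. u i = 0}" using lat unfolding is_lattice_def by simp
        thus ?thesis using that by (rule subsetD[THEN CollectD])
      qed
      have split: "nat \<bar>u i\<bar> = nat \<bar>v i\<bar> + nat \<bar>w i\<bar>" for i
        using v(3) int_aux5[of "v i" "u i"] unfolding conf_def w_def by blast
      have nsum: "norm1 m u = norm1 m v + norm1 m w"
        unfolding norm1_def split by (simp add: sum.distrib)
      have nv: "norm1 m v < norm1 m u" using nsum norm1_pos[OF vanish[OF wL] wnz] by simp
      have nw: "norm1 m w < norm1 m u" using nsum norm1_pos[OF vanish[OF v(1)] v(2)] by simp
      have IHv: "(binG m v :: 'k mpoly) \<in> gen_ideal m (binG m ` graver L)"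
        using less.hyps[OF nv v(1)] .
      have IHw: "(binG m w :: 'k mpoly) \<in> gen_ideal m (binG m ` graver L)"
        using less.hyps[OF nw wL] .
      have pe: "pos_part m u = pos_part m v + pos_part m w" "neg_part m u = neg_part m v + neg_part m w"
        using conf_add_pos[OF v(3) w_def] by auto
      have eq: "(binG m u :: 'k mpoly) = xmon (pos_part m w) * binG m v + xmon (neg_part m v) * binG m w"
        unfolding binG_def pe xmon_add by (simp add: algebra_simps)
      show ?thesis unfolding eq
        by (intro gen_ideal_add gen_ideal_mult IHv IHw in_ring_xmon keys_pos_part keys_neg_part)
    qed
  qed
qed

lemma lattice_ideal_graver:
  assumes lat: "is_lattice m L"
  shows "(lattice_ideal m L :: 'k::field mpoly set) = gen_ideal m (binG m ` graver L)"
proof -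
  have gens: "{xmon (pos_part m u) - xmon (neg_part m u) | u. u \<in> L} = (binG m ` L :: 'k mpoly set)"
    by (auto simp: binG_def)
  show ?thesis unfolding lattice_ideal_def gens
  proof
    show "gen_ideal m (binG m ` L) \<subseteq> (gen_ideal m (binG m ` graver L) :: 'k mpoly set)"
      by (rule gen_ideal_sub) (use graver_gen[OF lat] in blast)
    show "gen_ideal m (binG m ` graver L) \<subseteq> (gen_ideal m (binG m ` L) :: 'k mpoly set)"
      by (rule gen_ideal_mono) (auto simp: graver_def)
  qed
qed

lemma binG_binomial: "is_binomial m (binG m u)"
  unfolding is_binomial_def binG_def using keys_pos_part keys_neg_part by blast

lemma bar_exists:
  assumes lat: "is_lattice m L"
  shows "\<exists>s. \<exists>B :: nat \<Rightarrow> 'k::field mpoly.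
      (\<forall>i<s. is_binomial m (B i) \<and> B i \<in> lattice_ideal m L) \<and>
      radical m (lattice_ideal m L) = radical m (gen_ideal m (B ` {..<s}))"
proof -
  have fin: "finite (binG m ` graver L :: 'k mpoly set)" using graver_finite[OF lat] by simp
  from finite_imp_nat_seg_image_inj_on[OF fin]
  obtain n and f :: "nat \<Rightarrow> 'k mpoly" where nf: "(binG m ` graver L :: 'k mpoly set) = f ` {i. i < n}"
    by (elim exE conjE)
  have img: "f ` {..<n} = (binG m ` graver L :: 'k mpoly set)" using nf by (simp add: lessThan_def)
  have LI: "(lattice_ideal m L :: 'k mpoly set) = gen_ideal m (f ` {..<n})"
    using lattice_ideal_graver[OF lat] img by simp
  have "\<forall>i<n. is_binomial m (f i) \<and> f i \<in> lattice_ideal m L"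
  proof (intro allI impI conjI)
    fix i assume "i < n"
    hence fi: "f i \<in> binG m ` graver L" using img by blast
    then obtain u where "f i = binG m u" by blast
    thus "is_binomial m (f i)" by (simp add: binG_binomial)
    show "f i \<in> lattice_ideal m L" unfolding LI using \<open>i < n\<close> by (intro gen_ideal_base) blast
  qed
  hence "(\<forall>i<n. is_binomial m (f i) \<and> f i \<in> lattice_ideal m L) \<and>
      radical m (lattice_ideal m L) = radical m (gen_ideal m (f ` {..<n}))" using LI by simp
  thus ?thesis by (intro exI[of _ n] exI[of _ f])
qed



definition ple :: "(nat \<Rightarrow>\<^sub>0 nat) \<Rightarrow> (nat \<Rightarrow>\<^sub>0 nat) \<Rightarrow> bool" where
  "ple a b \<longleftrightarrow> (\<forall>i. Poly_Mapping.lookup a i \<le> Poly_Mapping.lookup b i)"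

definition Mon :: "nat \<Rightarrow> (nat \<Rightarrow> int) set \<Rightarrow> (nat \<Rightarrow>\<^sub>0 nat) \<Rightarrow> bool" where
  "Mon m L e \<longleftrightarrow> (\<exists>v\<in>L. v \<noteq> (\<lambda>i. 0) \<and> ple (pos_part m v) e)"

lemma lat_neg:
  assumes "is_lattice m L" "u \<in> L" shows "(\<lambda>i. - u i) \<in> L"
proof -
  have h: "\<forall>u\<in>L. (\<lambda>i. - u i) \<in> L" using assms(1) by (simp add: is_lattice_def)
  show ?thesis using h assms(2) by (rule bspec)
qed

lemma lat_van: "is_lattice m L \<Longrightarrow> u \<in> L \<Longrightarrow> \<forall>i\<ge>m. u i = 0"
  unfolding is_lattice_def by (elim conjE) (drule subsetD, assumption, simp)

lemma ple_trans: "ple a b \<Longrightarrow> ple b c \<Longrightarrow> ple a c"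
  unfolding ple_def using order_trans by blast

lemma ple_antisym: "ple a b \<Longrightarrow> ple b a \<Longrightarrow> a = b"
  unfolding ple_def by (intro poly_mapping_eqI) (simp add: order_antisym)

lemma ple_add: "ple b (a + b)"
  unfolding ple_def by (simp add: lookup_add)

lemma ple_keys: "ple a b \<Longrightarrow> Poly_Mapping.keys a \<subseteq> Poly_Mapping.keys b"
  unfolding ple_def by (auto simp: in_keys_iff) (metis less_le_trans)

lemma gens_eq: "{xmon (pos_part m u) - xmon (neg_part m u) | u. u \<in> L} = (binG m ` L :: 'k::field mpoly set)"
  by (auto simp: binG_def)

lemma lattice_ideal_alt: "(lattice_ideal m L :: 'k::field mpoly set) = gen_ideal m (binG m ` L)"
  unfolding lattice_ideal_def gens_eq ..

lemma keys_binG: "Poly_Mapping.keys (binG m u :: 'k::field mpoly) \<subseteq> {pos_part m u, neg_part m u}"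
  unfolding binG_def xmon_def using keys_diff[of "Poly_Mapping.single (pos_part m u) (1::'k)" "Poly_Mapping.single (neg_part m u) 1"]
  by auto

lemma in_ring_binG: "in_ring m (binG m u :: 'k::field mpoly)"
  unfolding binG_def by (intro in_ring_diff in_ring_xmon keys_pos_part keys_neg_part)

lemma keys_Mon:
  assumes lat: "is_lattice m L" and p: "(p :: 'k::field mpoly) \<in> lattice_ideal m L"
  shows "\<forall>e\<in>Poly_Mapping.keys p. Mon m L e"
proof -
  define Good where "Good q \<longleftrightarrow> (\<forall>e\<in>Poly_Mapping.keys q. Mon m L e)" for q :: "'k mpoly"
  have Mon_up: "Mon m L (a + b)" if "Mon m L b" for a b
    using that ple_trans[OF _ ple_add] unfolding Mon_def by blast
  have good_mult: "Good (c * q)" if "Good q" for c q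
  proof -
    have "Mon m L e" if e: "e \<in> Poly_Mapping.keys (c * q)" for e
    proof -
      obtain a b where "e = a + b" "b \<in> Poly_Mapping.keys q" using e keys_mult[of c q] by blast
      thus ?thesis using \<open>Good q\<close> Mon_up unfolding Good_def by blast
    qed
    thus ?thesis unfolding Good_def by blast
  qed
  have good_sum: "Good (sum f F)" if "\<And>s. s \<in> F \<Longrightarrow> Good (f s)" for f :: "'k mpoly \<Rightarrow> 'k mpoly" and F
    using that keys_sum[of f F] unfolding Good_def by blast
  have good_gen: "Good (binG m u)" if u: "u \<in> L" for u
  proof (cases "u = (\<lambda>i. 0)")
    case True thus ?thesis by (simp add: binG_zero Good_def)
  next
    case False
    have negL: "(\<lambda>i. - u i) \<in> L" using lat u by (rule lat_neg)
    have negnz: "(\<lambda>i. - u i) \<noteq> (\<lambda>i. 0)" using False by (auto simp: fun_eq_iff)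
    have "Mon m L (pos_part m u)" unfolding Mon_def ple_def using u False by blast
    moreover have "Mon m L (neg_part m u)" unfolding Mon_def ple_def neg_part_eq using negL negnz by blast
    ultimately show ?thesis using keys_binG[of m u] unfolding Good_def by blast
  qed
  from p obtain F c where F: "finite F" "F \<subseteq> binG m ` L" "p = (\<Sum>s\<in>F. c s * s)"
    unfolding lattice_ideal_alt gen_ideal_def by blast
  have "Good p" unfolding F(3)
  proof (rule good_sum)
    fix s assume "s \<in> F"
    then obtain u where "u \<in> L" "s = binG m u" using F(2) by blast
    thus "Good (c s * s)" using good_mult good_gen by blast
  qed
  thus ?thesis unfolding Good_def .
qed

definition psize :: "nat \<Rightarrow> (nat \<Rightarrow>\<^sub>0 nat) \<Rightarrow> nat" where
  "psize m d = (\<Sum>i<m. Poly_Mapping.lookup d i)"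

lemma minimal_exists:
  assumes lat: "is_lattice m L" and v: "v \<in> L" "v \<noteq> (\<lambda>i. 0)"
  shows "\<exists>u0\<in>L. u0 \<noteq> (\<lambda>i. 0) \<and> ple (pos_part m u0) (pos_part m v) \<and>
           (\<forall>u\<in>L. u \<noteq> (\<lambda>i. 0) \<longrightarrow> ple (pos_part m u) (pos_part m u0) \<longrightarrow> pos_part m u = pos_part m u0)"
proof -
  define P where "P n \<longleftrightarrow> (\<exists>u\<in>L. u \<noteq> (\<lambda>i. 0) \<and> ple (pos_part m u) (pos_part m v) \<and> psize m (pos_part m u) = n)" for n
  define n0 where "n0 = (LEAST n. P n)"
  have "P (psize m (pos_part m v))" unfolding P_def by (rule bexI[of _ v]) (use v in \<open>auto simp: ple_def\<close>)
  hence "P n0" unfolding n0_def by (rule LeastI)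
  then obtain u0 where u0: "u0 \<in> L" "u0 \<noteq> (\<lambda>i. 0)" "ple (pos_part m u0) (pos_part m v)"
    "psize m (pos_part m u0) = n0" unfolding P_def by blast
  have "pos_part m u = pos_part m u0"
    if u: "u \<in> L" "u \<noteq> (\<lambda>i. 0)" "ple (pos_part m u) (pos_part m u0)" for u
  proof (rule ccontr)
    assume ne: "pos_part m u \<noteq> pos_part m u0"
    have "P (psize m (pos_part m u))" unfolding P_def using u ple_trans[OF u(3) u0(3)] by blast
    hence ge: "n0 \<le> psize m (pos_part m u)" unfolding n0_def by (rule Least_le)
    have "\<exists>i. Poly_Mapping.lookup (pos_part m u) i \<noteq> Poly_Mapping.lookup (pos_part m u0) i"
    proof (rule ccontr)
      assume "\<not> ?thesis"
      hence "pos_part m u = pos_part m u0" by (intro poly_mapping_eqI) blast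
      thus False using ne by contradiction
    qed
    then obtain i where i: "Poly_Mapping.lookup (pos_part m u) i \<noteq> Poly_Mapping.lookup (pos_part m u0) i"
      by blast
    hence im: "i < m" by (auto simp: lookup_pos_part split: if_splits)
    have lt: "Poly_Mapping.lookup (pos_part m u) i < Poly_Mapping.lookup (pos_part m u0) i"
    proof -
      have "Poly_Mapping.lookup (pos_part m u) i \<le> Poly_Mapping.lookup (pos_part m u0) i"
        using u(3) unfolding ple_def by blast
      thus ?thesis using i by linarith
    qed
    have "psize m (pos_part m u) < psize m (pos_part m u0)" unfolding psize_def
      by (rule sum_strict_mono_ex1) (use u(3) lt im in \<open>auto simp: ple_def\<close>)
    thus False using ge u0(4) by simp
  qed
  thus ?thesis using u0 by blast
qed

lemma pos_neq_neg:
  assumes "\<forall>i\<ge>m. u i = 0" "u \<noteq> (\<lambda>i. 0)"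
  shows "pos_part m u \<noteq> neg_part m u"
proof
  assume eq: "pos_part m u = neg_part m u"
  obtain i where i: "u i \<noteq> 0" using assms(2) by auto
  hence im: "i < m" using assms(1) by (meson not_le)
  have "nat (u i) = nat (- u i)"
    using arg_cong[OF eq, of "\<lambda>p. Poly_Mapping.lookup p i"] im by (simp add: lookup_pos_part lookup_neg_part)
  thus False using i by linarith
qed

lemma indisp_min:
  assumes lat: "is_lattice m L" and u0: "u0 \<in> L" "u0 \<noteq> (\<lambda>i. 0)"
    and mini: "\<forall>u\<in>L. u \<noteq> (\<lambda>i. 0) \<longrightarrow> ple (pos_part m u) (pos_part m u0) \<longrightarrow> pos_part m u = pos_part m u0"
  shows "indispensable m (lattice_ideal m L :: 'k::field mpoly set) (pos_part m u0)"
  unfolding indispensable_def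
proof (intro conjI allI impI)
  show "Poly_Mapping.keys (pos_part m u0) \<subseteq> {..<m}" by (rule keys_pos_part)
  fix G :: "'k mpoly set"
  assume G: "(\<forall>g\<in>G. is_binomial m g) \<and> gen_ideal m G = lattice_ideal m L"
  let ?d = "pos_part m u0"
  have "(binG m u0 :: 'k mpoly) \<in> lattice_ideal m L"
    unfolding lattice_ideal_alt using u0(1) by (intro gen_ideal_base) blast
  hence "binG m u0 \<in> gen_ideal m G" using G by simp
  then obtain F c where F: "finite F" "F \<subseteq> G" "binG m u0 = (\<Sum>s\<in>F. c s * s)"
    unfolding gen_ideal_def by blast
  have van: "\<forall>i\<ge>m. u0 i = 0" using lat u0(1) by (rule lat_van)
  have "Poly_Mapping.lookup (binG m u0 :: 'k mpoly) ?d = 1"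
    using pos_neq_neg[OF van u0(2)] unfolding binG_def xmon_def
    by (simp add: lookup_minus lookup_single)
  hence ne: "(\<Sum>s\<in>F. Poly_Mapping.lookup (c s * s) ?d) \<noteq> 0" unfolding F(3) lookup_sum by simp
  have "\<exists>g\<in>F. Poly_Mapping.lookup (c g * g) ?d \<noteq> 0"
  proof (rule ccontr)
    assume "\<not> ?thesis"
    hence "(\<Sum>s\<in>F. Poly_Mapping.lookup (c s * s) ?d) = 0" by (intro sum.neutral) blast
    thus False using ne by contradiction
  qed
  then obtain g where g: "g \<in> F" "Poly_Mapping.lookup (c g * g) ?d \<noteq> 0" by blast
  hence "?d \<in> Poly_Mapping.keys (c g * g)" by (simp add: in_keys_iff)
  then obtain a b where ab: "?d = a + b" "b \<in> Poly_Mapping.keys g" using keys_mult[of "c g" g] by blast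
  have gI: "g \<in> lattice_ideal m L" using G F(2) g(1) gen_ideal_base[of g G m] by blast
  have "Mon m L b" using keys_Mon[OF lat gI] ab(2) by blast
  then obtain v where v: "v \<in> L" "v \<noteq> (\<lambda>i. 0)" "ple (pos_part m v) b" unfolding Mon_def by blast
  have bd: "ple b ?d" using ple_add[of b a] ab(1) by simp
  have "pos_part m v = ?d" using mini v(1,2) ple_trans[OF v(3) bd] by blast
  hence "b = ?d" using ple_antisym[OF bd] v(3) by simp
  thus "\<exists>B\<in>G. ?d \<in> Poly_Mapping.keys B" using ab(2) g(1) F(2) by blast
qed



lemma T_min_key:
  assumes lat: "is_lattice m L"
    and S: "S \<in> T_min m (lattice_ideal m L :: 'k::field mpoly set)"
    and e: "Mon m L e" "Poly_Mapping.keys e \<subseteq> S"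
  shows "Poly_Mapping.keys e = S"
proof -
  let ?T = "{Poly_Mapping.keys c | c. indispensable m (lattice_ideal m L :: 'k mpoly set) c}"
  have ST: "S \<in> ?T" and Smin: "\<not> (\<exists>S'\<in>?T. S' \<subset> S)"
    using S unfolding T_min_def Let_def by blast+
  obtain v where v: "v \<in> L" "v \<noteq> (\<lambda>i. 0)" "ple (pos_part m v) e" using e(1) unfolding Mon_def by blast
  obtain u0 where u0: "u0 \<in> L" "u0 \<noteq> (\<lambda>i. 0)" "ple (pos_part m u0) (pos_part m v)"
    "\<forall>u\<in>L. u \<noteq> (\<lambda>i. 0) \<longrightarrow> ple (pos_part m u) (pos_part m u0) \<longrightarrow> pos_part m u = pos_part m u0"
    using minimal_exists[OF lat v(1) v(2)] by blast
  have ind: "indispensable m (lattice_ideal m L :: 'k mpoly set) (pos_part m u0)"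
    using indisp_min[OF lat u0(1) u0(2) u0(4)] .
  have kd: "Poly_Mapping.keys (pos_part m u0) \<subseteq> Poly_Mapping.keys e"
    using ple_keys[OF ple_trans[OF u0(3) v(3)]] .
  have inT: "Poly_Mapping.keys (pos_part m u0) \<in> ?T" using ind by blast
  have "\<not> Poly_Mapping.keys (pos_part m u0) \<subset> S" using Smin inT by blast
  hence "Poly_Mapping.keys (pos_part m u0) = S" using kd e(2) by blast
  thus ?thesis using kd e(2) by blast
qed

definition Out :: "nat set \<Rightarrow> 'k::field mpoly \<Rightarrow> bool" where
  "Out S q \<longleftrightarrow> (\<forall>e\<in>Poly_Mapping.keys q. \<not> Poly_Mapping.keys e \<subseteq> S)"

definition InS :: "nat set \<Rightarrow> 'k::field mpoly \<Rightarrow> bool" where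
  "InS S q \<longleftrightarrow> (\<forall>e\<in>Poly_Mapping.keys q. Poly_Mapping.keys e \<subseteq> S)"

lemma Out_add: "Out S p \<Longrightarrow> Out S q \<Longrightarrow> Out S (p + q)"
  unfolding Out_def using keys_add[of p q] by blast

lemma Out_diff: "Out S p \<Longrightarrow> Out S q \<Longrightarrow> Out S (p - q)"
  unfolding Out_def using keys_diff[of p q] by blast

lemma Out_zero: "Out S 0"
  unfolding Out_def by simp

lemma Out_mult_left: "Out S q \<Longrightarrow> Out S (c * q)"
proof -
  assume q: "Out S q"
  have "\<not> Poly_Mapping.keys e \<subseteq> S" if e: "e \<in> Poly_Mapping.keys (c * q)" for e
  proof -
    obtain a b where ab: "e = a + b" "b \<in> Poly_Mapping.keys q" using e keys_mult[of c q] by blast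
    have "\<not> Poly_Mapping.keys b \<subseteq> S" using q ab(2) unfolding Out_def by blast
    thus ?thesis using ab(1) keys_add_nat2[of b a] by blast
  qed
  thus ?thesis unfolding Out_def by blast
qed

lemma Out_mult_right: "Out S q \<Longrightarrow> Out S (q * c)"
  using Out_mult_left[of S q c] by (simp add: mult.commute)

lemma Out_sum: "finite F \<Longrightarrow> (\<And>s. s \<in> F \<Longrightarrow> Out S (f s)) \<Longrightarrow> Out S (sum f F)"
  by (induction F rule: finite_induct) (auto intro: Out_add Out_zero)

lemma InS_mult: "InS S p \<Longrightarrow> InS S q \<Longrightarrow> InS S (p * q)"
proof -
  assume p: "InS S p" and q: "InS S q"
  have "Poly_Mapping.keys e \<subseteq> S" if e: "e \<in> Poly_Mapping.keys (p * q)" for e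
  proof -
    obtain a b where ab: "e = a + b" "a \<in> Poly_Mapping.keys p" "b \<in> Poly_Mapping.keys q"
      using e keys_mult[of p q] by blast
    thus ?thesis using p q keys_add_nat_eq[of a b] unfolding InS_def by blast
  qed
  thus ?thesis unfolding InS_def by blast
qed

lemma InS_one: "InS S (1 :: 'k::field mpoly)"
  unfolding InS_def by simp

lemma InS_power: "InS S p \<Longrightarrow> InS S (p ^ n)"
  by (induction n) (simp_all add: InS_one InS_mult)

lemma InS_Out_zero: "InS S p \<Longrightarrow> Out S p \<Longrightarrow> p = 0"
  unfolding InS_def Out_def by (metis keys_eq_empty all_not_in_conv)

definition proj :: "nat set \<Rightarrow> 'k::field mpoly \<Rightarrow> 'k mpoly" where
  "proj S p = Abs_poly_mapping (\<lambda>e. if Poly_Mapping.keys e \<subseteq> S then Poly_Mapping.lookup p e else 0)"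

lemma lookup_proj: "Poly_Mapping.lookup (proj S p) e = (if Poly_Mapping.keys e \<subseteq> S then Poly_Mapping.lookup p e else 0)"
proof -
  have "finite {e. (if Poly_Mapping.keys e \<subseteq> S then Poly_Mapping.lookup p e else 0) \<noteq> 0}"
    by (rule finite_subset[of _ "Poly_Mapping.keys p"]) (auto simp: in_keys_iff split: if_splits)
  thus ?thesis unfolding proj_def by simp
qed

lemma InS_proj: "InS S (proj S p)"
  unfolding InS_def
proof
  fix e assume "e \<in> Poly_Mapping.keys (proj S p)"
  hence "Poly_Mapping.lookup (proj S p) e \<noteq> 0" by (rule iffD1[OF in_keys_iff])
  thus "Poly_Mapping.keys e \<subseteq> S" by (simp add: lookup_proj split: if_splits)
qed

lemma Out_rest: "Out S (p - proj S p)"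
  unfolding Out_def
proof
  fix e assume "e \<in> Poly_Mapping.keys (p - proj S p)"
  hence "Poly_Mapping.lookup (p - proj S p) e \<noteq> 0" by (rule iffD1[OF in_keys_iff])
  thus "\<not> Poly_Mapping.keys e \<subseteq> S" by (simp add: lookup_proj lookup_minus split: if_splits)
qed

lemma power_decomp:
  fixes p :: "'k::field mpoly"
  shows "\<exists>r. Out S r \<and> p ^ n = (proj S p) ^ n + r"
proof (induction n)
  case 0 thus ?case using Out_zero by (intro exI[of _ 0]) simp
next
  case (Suc n)
  then obtain r where r: "Out S r" "p ^ n = (proj S p) ^ n + r" by blast
  let ?a = "proj S p" and ?r0 = "p - proj S p"
  have p: "p = ?a + ?r0" by simp
  have "p ^ Suc n = (?a + ?r0) * (?a ^ n + r)" using r(2) p by (metis power_Suc)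
  also have "\<dots> = ?a ^ Suc n + (?a * r + ?r0 * (?a ^ n + r))" by (simp add: algebra_simps)
  finally have eq: "p ^ Suc n = ?a ^ Suc n + (?a * r + ?r0 * (?a ^ n + r))" .
  have "Out S (?a * r + ?r0 * (?a ^ n + r))"
    by (intro Out_add Out_mult_left Out_mult_right r(1) Out_rest)
  thus ?case using eq by blast
qed

lemma hit:
  fixes B :: "nat \<Rightarrow> 'k::field mpoly"
  assumes lat: "is_lattice m L"
    and S: "S \<in> T_min m (lattice_ideal m L :: 'k mpoly set)"
    and rad: "radical m (lattice_ideal m L) = radical m (gen_ideal m (B ` {..<s}))"
  shows "\<exists>i<s. \<exists>e\<in>Poly_Mapping.keys (B i). Poly_Mapping.keys e \<subseteq> S"
proof (rule ccontr)
  assume no: "\<not> ?thesis"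
  let ?I = "lattice_ideal m L :: 'k mpoly set"
  obtain c where c: "indispensable m ?I c" "S = Poly_Mapping.keys c"
    using S unfolding T_min_def Let_def by blast
  have G01: "\<forall>g\<in>(binG m ` L :: 'k mpoly set). is_binomial m g" using binG_binomial by blast
  have G0: "(\<forall>g\<in>(binG m ` L :: 'k mpoly set). is_binomial m g) \<and> gen_ideal m (binG m ` L) = ?I"
  proof (rule conjI)
    show "\<forall>g\<in>(binG m ` L :: 'k mpoly set). is_binomial m g" by (rule G01)
    show "gen_ideal m (binG m ` L) = ?I" by (rule lattice_ideal_alt[symmetric])
  qed
  have allG: "\<forall>G. (\<forall>g\<in>G. is_binomial m g) \<and> gen_ideal m G = ?I \<longrightarrow> (\<exists>B\<in>G. c \<in> Poly_Mapping.keys B)"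
    using c(1) unfolding indispensable_def by (rule conjunct2)
  have "\<exists>B\<in>(binG m ` L :: 'k mpoly set). c \<in> Poly_Mapping.keys B" using allG[rule_format, OF G0] .
  then obtain g :: "'k mpoly" where g: "g \<in> binG m ` L" "c \<in> Poly_Mapping.keys g" by blast
  then obtain u where u: "u \<in> L" "g = binG m u" by blast
  have gI: "g \<in> ?I" unfolding lattice_ideal_alt using g(1) by (rule gen_ideal_base)
  have "g \<in> radical m ?I" unfolding radical_def using gI u(2) in_ring_binG
    by (intro CollectI conjI exI[of _ 1]) auto
  hence "g \<in> radical m (gen_ideal m (B ` {..<s}))" using rad by simp
  then obtain n where n: "g ^ n \<in> gen_ideal m (B ` {..<s})" unfolding radical_def by blast
  have OutB: "Out S (B i)" if "i < s" for i using no that unfolding Out_def by blast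
  have "Out S q" if q: "q \<in> gen_ideal m (B ` {..<s})" for q
  proof -
    obtain F cc where F: "finite F" "F \<subseteq> B ` {..<s}" "q = (\<Sum>s\<in>F. cc s * s)"
      using q unfolding gen_ideal_def by blast
    show ?thesis unfolding F(3)
    proof (rule Out_sum[OF F(1)])
      fix x assume "x \<in> F"
      then obtain i where "i < s" "x = B i" using F(2) by blast
      thus "Out S (cc x * x)" using OutB by (simp add: Out_mult_left)
    qed
  qed
  hence Outn: "Out S (g ^ n)" using n by blast
  obtain r where r: "Out S r" "g ^ n = (proj S g) ^ n + r" using power_decomp by blast
  have "(proj S g) ^ n = g ^ n - r" using r(2) by simp
  hence "Out S ((proj S g) ^ n)" using Out_diff[OF Outn r(1)] by simp
  moreover have "InS S ((proj S g) ^ n)" by (intro InS_power InS_proj)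
  ultimately have z: "(proj S g) ^ n = 0" by (rule InS_Out_zero[rotated])
  have "Poly_Mapping.lookup g c \<noteq> 0" using g(2) by (rule iffD1[OF in_keys_iff])
  hence "Poly_Mapping.lookup (proj S g) c \<noteq> 0" using c(2) by (simp add: lookup_proj)
  hence "proj S g \<noteq> 0" by auto
  thus False using z by simp
qed



theorem proposition2p15:
  fixes m :: nat and L :: "(nat \<Rightarrow> int) set"
  assumes "is_lattice m L"
    and "L \<noteq> {(\<lambda>i. 0)}"
    and "\<forall>u\<in>L. (\<forall>i. u i \<ge> 0) \<longrightarrow> u = (\<lambda>i. 0)"
  shows "int (bar m (lattice_ideal m L :: 'k::field mpoly set))
           \<ge> \<lceil>real (card (T_min m (lattice_ideal m L :: 'k mpoly set))) / 2\<rceil>"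
proof -
  let ?I = "lattice_ideal m L :: 'k mpoly set"
  define P where "P s \<longleftrightarrow> (\<exists>B :: nat \<Rightarrow> 'k mpoly. (\<forall>i<s. is_binomial m (B i) \<and> B i \<in> ?I) \<and>
      radical m ?I = radical m (gen_ideal m (B ` {..<s})))" for s
  have barP: "bar m ?I = (LEAST s. P s)" unfolding bar_def P_def ..
  have "\<exists>s. P s" unfolding P_def by (rule bar_exists[OF assms(1)])
  hence "P (LEAST s. P s)" by (rule LeastI_ex)
  hence "P (bar m ?I)" unfolding barP .
  then obtain B :: "nat \<Rightarrow> 'k mpoly" where
    B1: "\<forall>i<bar m ?I. is_binomial m (B i) \<and> B i \<in> ?I" and
    B2: "radical m ?I = radical m (gen_ideal m (B ` {..<bar m ?I}))"
    unfolding P_def by blast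
  define s where "s = bar m ?I"
  have B1': "\<forall>i<s. is_binomial m (B i) \<and> B i \<in> ?I" using B1 unfolding s_def .
  have B2': "radical m ?I = radical m (gen_ideal m (B ` {..<s}))" using B2 unfolding s_def .
  have sub: "T_min m ?I \<subseteq> (\<Union>i<s. Poly_Mapping.keys ` Poly_Mapping.keys (B i))"
  proof
    fix S assume S: "S \<in> T_min m ?I"
    obtain i e where i: "i < s" "e \<in> Poly_Mapping.keys (B i)" "Poly_Mapping.keys e \<subseteq> S"
      using hit[OF assms(1) S B2'] by blast
    have BiI: "B i \<in> ?I" using B1' i(1) by blast
    have "Mon m L e" using keys_Mon[OF assms(1) BiI] i(2) by blast
    hence "Poly_Mapping.keys e = S" using T_min_key[OF assms(1) S] i(3) by blast
    thus "S \<in> (\<Union>i<s. Poly_Mapping.keys ` Poly_Mapping.keys (B i))" using i(1,2) by blast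
  qed
  have card_each: "card (Poly_Mapping.keys ` Poly_Mapping.keys (B i)) \<le> 2" if hi: "i < s" for i
  proof -
    obtain a b where ab: "B i = xmon a - xmon b" using B1' hi unfolding is_binomial_def by blast
    have "Poly_Mapping.keys (B i) \<subseteq> {a, b}"
      using ab keys_diff[of "xmon a :: 'k mpoly" "xmon b"] unfolding xmon_def by auto
    hence "card (Poly_Mapping.keys (B i)) \<le> card {a, b}" by (rule card_mono[rotated]) simp
    also have "\<dots> \<le> 2" by (cases "a = b") simp_all
    finally have "card (Poly_Mapping.keys (B i)) \<le> 2" .
    moreover have "card (Poly_Mapping.keys ` Poly_Mapping.keys (B i)) \<le> card (Poly_Mapping.keys (B i))"
      by (rule card_image_le) simp
    ultimately show ?thesis by linarith
  qed
  have "card (T_min m ?I) \<le> card (\<Union>i<s. Poly_Mapping.keys ` Poly_Mapping.keys (B i))"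
    by (rule card_mono[OF _ sub]) simp
  also have "\<dots> \<le> (\<Sum>i<s. card (Poly_Mapping.keys ` Poly_Mapping.keys (B i)))"
    by (rule card_UN_le) simp
  also have "\<dots> \<le> (\<Sum>i<s. 2)" by (rule sum_mono) (simp add: card_each)
  also have "\<dots> = 2 * s" by simp
  finally have q: "card (T_min m ?I) \<le> 2 * s" .
  hence "real (card (T_min m ?I)) \<le> 2 * real s" by (metis of_nat_le_iff of_nat_mult of_nat_numeral)
  hence "real (card (T_min m ?I)) / 2 \<le> of_int (int s)" by simp
  hence "\<lceil>real (card (T_min m ?I)) / 2\<rceil> \<le> int s" by (simp only: ceiling_le_iff)
  thus ?thesis unfolding s_def .
qed

end
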